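(* Suppose that the "bounded polynomials have influential variables" conjecture (stated in the context) holds, and let $\varepsilon,\delta>0$. Then given any quantum algorithm $Q$ that makes $T$ queries to a Boolean input $X\in\{0,1\}^N$, there exists a deterministic classical algorithm that makes $\mathrm{poly}(T,1/\varepsilon,1/\delta)$ queries, and that approximates $Q$'s acceptance probability to within an additive constant $\varepsilon$ on a $1-\delta$ fraction of inputs $X\in\{0,1\}^N$.
   Context: For a real polynomial $p:\mathbb{R}^N\to\mathbb{R}$ and $X\in\{0,1\}^N$, let $X^i$ denote $X$ with the $i$-th bit flipped. Define the $L_1$-variance $\mathrm{Vr}[p]:=\mathrm{E}_{X,Y\in\{0,1\}^N}[|p(X)-p(Y)|]$ and the influence of the $i$-th variable $\mathrm{Inf}_i[p]:=\mathrm{E}_{X\in\{0,1\}^N}[|p(X)-p(X^i)|]$. The conjecture ("bounded polynomials have influential variables"): for every polynomial $p:\mathbb{R}^N\to\mathbb{R}$ of degree $d$ such that $0\le p(X)\le 1$ for all $X\in\{0,1\}^N$ and $\mathrm{Vr}[p]\ge\varepsilon$, there exists an $i\in[N]$ such that $\mathrm{Inf}_i[p]\ge(\varepsilon/d)^{O(1)}$. *)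

theory Defs
  imports Complex_Main
begin

text \<open>Points of R^N are functions nat => real (coordinates 0..N-1; the others are ignored /
  set to 0 on the cube). The Boolean cube {0,1}^N.\<close>
definition cube :: "nat \<Rightarrow> (nat \<Rightarrow> real) set" where
  "cube N = {x. (\<forall>i<N. x i = 0 \<or> x i = 1) \<and> (\<forall>i\<ge>N. x i = 0)}"

definition flip :: "nat \<Rightarrow> (nat \<Rightarrow> real) \<Rightarrow> (nat \<Rightarrow> real)" where
  "flip i x = x(i := 1 - x i)"

definition is_poly :: "nat \<Rightarrow> nat \<Rightarrow> ((nat \<Rightarrow> real) \<Rightarrow> real) \<Rightarrow> bool" where
  "is_poly N d p \<longleftrightarrow> (\<exists>A :: (nat \<Rightarrow> nat) set. \<exists>c :: (nat \<Rightarrow> nat) \<Rightarrow> real.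
      finite A \<and> (\<forall>\<alpha>\<in>A. (\<forall>i\<ge>N. \<alpha> i = 0) \<and> (\<Sum>i<N. \<alpha> i) \<le> d) \<and>
      (\<forall>x. p x = (\<Sum>\<alpha>\<in>A. c \<alpha> * (\<Prod>i<N. x i ^ \<alpha> i))))"

definition Vr :: "nat \<Rightarrow> ((nat \<Rightarrow> real) \<Rightarrow> real) \<Rightarrow> real" where
  "Vr N p = (\<Sum>x\<in>cube N. \<Sum>y\<in>cube N. \<bar>p x - p y\<bar>) / (2 ^ N * 2 ^ N)"

definition Inf :: "nat \<Rightarrow> nat \<Rightarrow> ((nat \<Rightarrow> real) \<Rightarrow> real) \<Rightarrow> real" where
  "Inf N i p = (\<Sum>x\<in>cube N. \<bar>p x - p (flip i x)\<bar>) / 2 ^ N"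

definition bpiv_conjecture :: bool where
  "bpiv_conjecture \<longleftrightarrow> (\<exists>c::real > 0. \<forall>N d p \<epsilon>.
      d \<ge> 1 \<longrightarrow> \<epsilon> > 0 \<longrightarrow> is_poly N d p \<longrightarrow>
      (\<forall>x\<in>cube N. 0 \<le> p x \<and> p x \<le> 1) \<longrightarrow> Vr N p \<ge> \<epsilon> \<longrightarrow>
      (\<exists>i<N. Inf N i p \<ge> (\<epsilon> / real d) powr c))"

text \<open>Computational basis: pairs (i, w), i in {0..N} the query register (i = 0 is the
  null query, i >= 1 queries bit x_(i-1)), w in {0..<M} the workspace.\<close>
definition qbasis :: "nat \<Rightarrow> nat \<Rightarrow> (nat \<times> nat) set" where
  "qbasis N M = {0..N} \<times> {0..<M}"

type_synonym qstate = "nat \<times> nat \<Rightarrow> complex"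
type_synonym qop = "nat \<times> nat \<Rightarrow> nat \<times> nat \<Rightarrow> complex"

definition unitary_on :: "(nat \<times> nat) set \<Rightarrow> qop \<Rightarrow> bool" where
  "unitary_on B U \<longleftrightarrow> (\<forall>a\<in>B. \<forall>b\<in>B.
      (\<Sum>k\<in>B. cnj (U k a) * U k b) = (if a = b then 1 else 0))"

definition apply_op :: "(nat \<times> nat) set \<Rightarrow> qop \<Rightarrow> qstate \<Rightarrow> qstate" where
  "apply_op B U v = (\<lambda>a. \<Sum>b\<in>B. U a b * v b)"

definition query_op :: "nat \<Rightarrow> (nat \<Rightarrow> real) \<Rightarrow> qstate \<Rightarrow> qstate" where
  "query_op N x v = (\<lambda>(i, w). if 1 \<le> i \<and> i \<le> N \<and> x (i - 1) = 1 then - v (i, w) else v (i, w))"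

primrec qrun :: "nat \<Rightarrow> nat \<Rightarrow> (nat \<Rightarrow> qop) \<Rightarrow> (nat \<Rightarrow> real) \<Rightarrow> nat \<Rightarrow> qstate" where
  "qrun N M Us x 0 = apply_op (qbasis N M) (Us 0) (\<lambda>a. if a = (0, 0) then 1 else 0)"
| "qrun N M Us x (Suc t) = apply_op (qbasis N M) (Us (Suc t)) (query_op N x (qrun N M Us x t))"

definition acc_prob :: "nat \<Rightarrow> nat \<Rightarrow> (nat \<Rightarrow> qop) \<Rightarrow> (nat \<times> nat) set \<Rightarrow> nat \<Rightarrow> (nat \<Rightarrow> real) \<Rightarrow> real" where
  "acc_prob N M Us Acc T x = (\<Sum>a\<in>Acc. (cmod (qrun N M Us x T a))\<^sup>2)"

datatype dtree = Leaf real | Query nat dtree dtree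

fun dt_eval :: "dtree \<Rightarrow> (nat \<Rightarrow> real) \<Rightarrow> real" where
  "dt_eval (Leaf r) x = r"
| "dt_eval (Query i t0 t1) x = (if x i = 0 then dt_eval t0 x else dt_eval t1 x)"

fun dt_depth :: "dtree \<Rightarrow> nat" where
  "dt_depth (Leaf r) = 0"
| "dt_depth (Query i t0 t1) = Suc (max (dt_depth t0) (dt_depth t1))"

end

theory Submission
  imports Defs "HOL-Analysis.Convex"
begin


definition ind :: "nat set \<Rightarrow> nat \<Rightarrow> real" where
  "ind S = (\<lambda>i. if i \<in> S then 1 else 0)"

lemma cube_image: "cube N = ind ` Pow {..<N}"
proof
  show "cube N \<subseteq> ind ` Pow {..<N}"
  proof
    fix x assume x: "x \<in> cube N"
    have "x = ind {i. i < N \<and> x i = 1}"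
      using x unfolding cube_def ind_def by (auto simp: fun_eq_iff) (metis not_le)
    then show "x \<in> ind ` Pow {..<N}" by blast
  qed
  show "ind ` Pow {..<N} \<subseteq> cube N" by (auto simp: cube_def ind_def)
qed

lemma finite_cube[simp]: "finite (cube N)"
  by (simp add: cube_image)

lemma card_cube: "card (cube N) = 2 ^ N"
proof -
  have "inj_on ind (Pow {..<N})"
    unfolding inj_on_def ind_def fun_eq_iff by (metis one_neq_zero subsetI subset_antisym)
  then show ?thesis by (simp add: cube_image card_image card_Pow)
qed

lemma cube_01: "x \<in> cube N \<Longrightarrow> x i = 0 \<or> x i = 1"
  unfolding cube_def by (cases "i < N") auto

lemma flip_cube: "x \<in> cube N \<Longrightarrow> j < N \<Longrightarrow> flip j x \<in> cube N"
  unfolding cube_def flip_def by auto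

lemma flip_flip[simp]: "flip j (flip j x) = x"
  unfolding flip_def by auto

lemma flip_j[simp]: "flip j x j = 1 - x j" unfolding flip_def by auto
lemma flip_other[simp]: "i \<noteq> j \<Longrightarrow> flip j x i = x i" unfolding flip_def by auto

definition chi :: "nat set \<Rightarrow> (nat \<Rightarrow> real) \<Rightarrow> real" where
  "chi S x = (\<Prod>i\<in>S. 1 - 2 * x i)"

lemma chi_flip: "finite S \<Longrightarrow> chi S (flip j x) = (if j \<in> S then - chi S x else chi S x)"
proof -
  assume S: "finite S"
  show ?thesis
  proof (cases "j \<in> S")
    case True
    have "chi S (flip j x) = (1 - 2 * flip j x j) * (\<Prod>i\<in>S-{j}. 1 - 2 * flip j x i)"
      unfolding chi_def using S True by (simp add: prod.remove)
    also have "(\<Prod>i\<in>S-{j}. 1 - 2 * flip j x i) = (\<Prod>i\<in>S-{j}. 1 - 2 * x i)"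
      by (rule prod.cong) auto
    also have "chi S x = (1 - 2 * x j) * (\<Prod>i\<in>S-{j}. 1 - 2 * x i)"
      unfolding chi_def using S True by (simp add: prod.remove)
    ultimately show ?thesis using True by (simp add: algebra_simps)
  next
    case False
    then show ?thesis unfolding chi_def flip_def by (auto intro!: prod.cong)
  qed
qed

lemma chi_sq: "x \<in> cube N \<Longrightarrow> chi S x * chi S x = 1"
proof -
  assume x: "x \<in> cube N"
  have "chi S x * chi S x = (\<Prod>i\<in>S. (1 - 2 * x i) * (1 - 2 * x i))"
    unfolding chi_def by (simp add: prod.distrib)
  also have "\<dots> = 1"
  proof (intro prod.neutral ballI)
    fix i assume "i \<in> S"
    show "(1 - 2 * x i) * (1 - 2 * x i) = 1" using cube_01[OF x, of i] by auto
  qed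
  finally show ?thesis .
qed

lemma chi_mult: "x \<in> cube N \<Longrightarrow> finite S \<Longrightarrow> finite T \<Longrightarrow>
   chi S x * chi T x = chi ((S - T) \<union> (T - S)) x"
proof -
  assume x: "x \<in> cube N" and S: "finite S" and T: "finite T"
  have 1: "chi S x = chi (S - T) x * chi (S \<inter> T) x"
    unfolding chi_def using S by (metis Diff_Diff_Int Diff_subset prod.subset_diff inf_le1 mult.commute)
  have 2: "chi T x = chi (T - S) x * chi (S \<inter> T) x"
    unfolding chi_def using T
    by (metis Diff_Diff_Int Diff_subset prod.subset_diff inf_le2 mult.commute inf_commute)
  have 3: "chi ((S - T) \<union> (T - S)) x = chi (S - T) x * chi (T - S) x"
    unfolding chi_def using S T by (intro prod.union_disjoint) auto
  show ?thesis using chi_sq[OF x, of "S \<inter> T"] unfolding 1 2 3 by (simp add: algebra_simps)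
qed

lemma sum_flip: assumes "j < N" shows "(\<Sum>x\<in>cube N. h (flip j x)) = (\<Sum>x\<in>cube N. h x)"
  by (rule sum.reindex_bij_witness[of _ "flip j" "flip j"]) (auto simp: flip_cube assms)

lemma sum_chi0: assumes "S \<subseteq> {..<N}" "S \<noteq> {}" shows "(\<Sum>x\<in>cube N. chi S x) = 0"
proof -
  obtain j where j: "j \<in> S" using assms by auto
  have jN: "j < N" using j assms by auto
  have fS: "finite S" using assms finite_subset by blast
  have "(\<Sum>x\<in>cube N. chi S x) = (\<Sum>x\<in>cube N. chi S (flip j x))" using sum_flip[OF jN, of "chi S", symmetric] by simp
  also have "\<dots> = - (\<Sum>x\<in>cube N. chi S x)" using chi_flip[OF fS] j by (simp add: sum_negf)
  finally show ?thesis by simp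
qed

lemma chi_empty[simp]: "chi {} x = 1" unfolding chi_def by simp

lemma chi_orth: assumes "S \<subseteq> {..<N}" "T \<subseteq> {..<N}"
  shows "(\<Sum>x\<in>cube N. chi S x * chi T x) = (if S = T then 2 ^ N else 0)"
proof -
  have f: "finite S" "finite T" using assms finite_subset by blast+
  have "(\<Sum>x\<in>cube N. chi S x * chi T x) = (\<Sum>x\<in>cube N. chi ((S - T) \<union> (T - S)) x)"
    using chi_mult f by (intro sum.cong) auto
  moreover have "S = T \<Longrightarrow> (\<Sum>x\<in>cube N. chi ((S - T) \<union> (T - S)) x) = 2 ^ N"
    by (simp add: card_cube)
  moreover have "S \<noteq> T \<Longrightarrow> (\<Sum>x\<in>cube N. chi ((S - T) \<union> (T - S)) x) = 0"
    using assms by (intro sum_chi0) auto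
  ultimately show ?thesis by auto
qed


definition sets :: "nat \<Rightarrow> nat \<Rightarrow> nat set set" where
  "sets N d = {S. S \<subseteq> {..<N} \<and> card S \<le> d}"

lemma finite_sets[simp]: "finite (sets N d)"
  unfolding sets_def by (rule finite_subset[of _ "Pow {..<N}"]) auto

definition chipoly :: "nat \<Rightarrow> nat \<Rightarrow> ((nat \<Rightarrow> real) \<Rightarrow> real) \<Rightarrow> bool" where
  "chipoly N d f \<longleftrightarrow> (\<exists>c. \<forall>x\<in>cube N. f x = (\<Sum>S\<in>sets N d. c S * chi S x))"

lemma chipoly_cong: "chipoly N d f \<Longrightarrow> (\<And>x. x \<in> cube N \<Longrightarrow> f x = g x) \<Longrightarrow> chipoly N d g"
  unfolding chipoly_def by metis

lemma chipoly_chi: assumes "S \<subseteq> {..<N}" "card S \<le> d" shows "chipoly N d (\<lambda>x. a * chi S x)"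
  unfolding chipoly_def
proof (intro exI ballI)
  fix x
  have "(\<Sum>T\<in>sets N d. (if T = S then a else 0) * chi T x) = (\<Sum>T\<in>sets N d. if T = S then a * chi S x else 0)"
    by (intro sum.cong) auto
  also have "\<dots> = a * chi S x" using assms by (simp add: sets_def)
  finally show "a * chi S x = (\<Sum>T\<in>sets N d. (if T = S then a else 0) * chi T x)" by simp
qed

lemma chipoly_const: "chipoly N d (\<lambda>x. a)"
  using chipoly_chi[of "{}" N d a] by simp

lemma chipoly_add: assumes "chipoly N d f" "chipoly N d g" shows "chipoly N d (\<lambda>x. f x + g x)"
proof -
  obtain c where c: "\<forall>x\<in>cube N. f x = (\<Sum>S\<in>sets N d. c S * chi S x)" using assms unfolding chipoly_def by blast
  obtain e where e: "\<forall>x\<in>cube N. g x = (\<Sum>S\<in>sets N d. e S * chi S x)" using assms unfolding chipoly_def by blast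
  show ?thesis unfolding chipoly_def
    by (rule exI[of _ "\<lambda>S. c S + e S"]) (simp add: c e distrib_right sum.distrib)
qed

lemma chipoly_scale: assumes "chipoly N d f" shows "chipoly N d (\<lambda>x. a * f x)"
proof -
  obtain c where c: "\<forall>x\<in>cube N. f x = (\<Sum>S\<in>sets N d. c S * chi S x)" using assms unfolding chipoly_def by blast
  show ?thesis unfolding chipoly_def
    by (rule exI[of _ "\<lambda>S. a * c S"]) (simp add: c sum_distrib_left mult.assoc)
qed

lemma chipoly_sum: assumes "finite I" "\<And>i. i \<in> I \<Longrightarrow> chipoly N d (f i)"
  shows "chipoly N d (\<lambda>x. \<Sum>i\<in>I. f i x)"
  using assms
proof (induction I rule: finite_induct)
  case empty then show ?case using chipoly_const[of N d 0] by simp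
next
  case (insert i I)
  have "chipoly N d (\<lambda>x. f i x + (\<Sum>i\<in>I. f i x))"
    by (rule chipoly_add) (use insert in auto)
  then show ?case using insert(1,2) by (simp add: sum.insert)
qed

lemma chipoly_mono: assumes "chipoly N d f" "d \<le> d'" shows "chipoly N d' f"
proof -
  obtain c where c: "\<forall>x\<in>cube N. f x = (\<Sum>S\<in>sets N d. c S * chi S x)" using assms unfolding chipoly_def by blast
  have "chipoly N d' (\<lambda>x. \<Sum>S\<in>sets N d. c S * chi S x)"
    by (rule chipoly_sum[OF finite_sets], rule chipoly_chi) (use assms(2) in \<open>auto simp: sets_def\<close>)
  then show ?thesis by (rule chipoly_cong) (use c in auto)
qed

lemma chipoly_mult: assumes "chipoly N d1 f" "chipoly N d2 g" shows "chipoly N (d1 + d2) (\<lambda>x. f x * g x)"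
proof -
  obtain c where c: "\<forall>x\<in>cube N. f x = (\<Sum>S\<in>sets N d1. c S * chi S x)" using assms unfolding chipoly_def by blast
  obtain e where e: "\<forall>x\<in>cube N. g x = (\<Sum>S\<in>sets N d2. e S * chi S x)" using assms unfolding chipoly_def by blast
  have "chipoly N (d1 + d2) (\<lambda>x. \<Sum>S\<in>sets N d1. \<Sum>T\<in>sets N d2. (c S * e T) * chi ((S - T) \<union> (T - S)) x)"
  proof (rule chipoly_sum[OF finite_sets], rule chipoly_sum[OF finite_sets], rule chipoly_chi)
    fix S T assume S: "S \<in> sets N d1" and T: "T \<in> sets N d2"
    then show "(S - T) \<union> (T - S) \<subseteq> {..<N}" by (auto simp: sets_def)
    have fS: "finite S" "finite T" using S T finite_subset unfolding sets_def by blast+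
    have "card ((S - T) \<union> (T - S)) \<le> card (S - T) + card (T - S)" by (rule card_Un_le)
    also have "\<dots> \<le> card S + card T" using fS by (intro add_mono card_mono) auto
    finally show "card ((S - T) \<union> (T - S)) \<le> d1 + d2" using S T by (auto simp: sets_def)
  qed
  then show ?thesis
  proof (rule chipoly_cong)
    fix x assume x: "x \<in> cube N"
    have "(\<Sum>S\<in>sets N d1. \<Sum>T\<in>sets N d2. (c S * e T) * chi ((S - T) \<union> (T - S)) x)
        = (\<Sum>S\<in>sets N d1. \<Sum>T\<in>sets N d2. (c S * chi S x) * (e T * chi T x))"
    proof (intro sum.cong refl)
      fix S T assume S: "S \<in> sets N d1" and T: "T \<in> sets N d2"
      have fS: "finite S" "finite T" using S T finite_subset unfolding sets_def by blast+
      show "(c S * e T) * chi ((S - T) \<union> (T - S)) x = (c S * chi S x) * (e T * chi T x)"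
        using chi_mult[OF x fS] by (simp add: algebra_simps)
    qed
    also have "\<dots> = f x * g x" using c e x by (simp add: sum_product)
    finally show "(\<Sum>S\<in>sets N d1. \<Sum>T\<in>sets N d2. (c S * e T) * chi ((S - T) \<union> (T - S)) x) = f x * g x" .
  qed
qed

definition merge :: "nat set \<Rightarrow> (nat \<Rightarrow> real) \<Rightarrow> (nat \<Rightarrow> real) \<Rightarrow> (nat \<Rightarrow> real)" where
  "merge R z x = (\<lambda>i. if i \<in> R then z i else x i)"

lemma merge_cube: "x \<in> cube N \<Longrightarrow> z \<in> cube N \<Longrightarrow> merge R z x \<in> cube N"
  unfolding cube_def merge_def by auto

lemma chi_merge: "finite S \<Longrightarrow> chi S (merge R z x) = chi (S \<inter> R) z * chi (S - R) x"
proof -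
  assume S: "finite S"
  have "chi S (merge R z x) = chi (S \<inter> R) (merge R z x) * chi (S - R) (merge R z x)"
    unfolding chi_def using S by (metis Diff_Diff_Int Diff_subset prod.subset_diff inf_le1 mult.commute)
  moreover have "chi (S \<inter> R) (merge R z x) = chi (S \<inter> R) z" unfolding chi_def merge_def by (auto intro!: prod.cong)
  moreover have "chi (S - R) (merge R z x) = chi (S - R) x" unfolding chi_def merge_def by (auto intro!: prod.cong)
  ultimately show ?thesis by simp
qed

lemma chipoly_merge: assumes "chipoly N d f" "z \<in> cube N" shows "chipoly N d (\<lambda>x. f (merge R z x))"
proof -
  obtain c where c: "\<forall>x\<in>cube N. f x = (\<Sum>S\<in>sets N d. c S * chi S x)" using assms unfolding chipoly_def by blast
  have "chipoly N d (\<lambda>x. \<Sum>S\<in>sets N d. (c S * chi (S \<inter> R) z) * chi (S - R) x)"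
  proof (rule chipoly_sum[OF finite_sets], rule chipoly_chi)
    fix S assume S: "S \<in> sets N d"
    then show "S - R \<subseteq> {..<N}" by (auto simp: sets_def)
    have fS: "finite S" using S finite_subset unfolding sets_def by blast
    have "card (S - R) \<le> card S" using fS by (intro card_mono) auto
    then show "card (S - R) \<le> d" using S by (auto simp: sets_def)
  qed
  then show ?thesis
  proof (rule chipoly_cong)
    fix x assume x: "x \<in> cube N"
    have "f (merge R z x) = (\<Sum>S\<in>sets N d. c S * chi S (merge R z x))"
      using c merge_cube[OF x assms(2)] by blast
    also have "\<dots> = (\<Sum>S\<in>sets N d. (c S * chi (S \<inter> R) z) * chi (S - R) x)"
    proof (intro sum.cong refl)
      fix S assume S: "S \<in> sets N d"
      have fS: "finite S" using S finite_subset unfolding sets_def by blast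
      show "c S * chi S (merge R z x) = (c S * chi (S \<inter> R) z) * chi (S - R) x"
        using chi_merge[OF fS] by simp
    qed
    finally show "(\<Sum>S\<in>sets N d. (c S * chi (S \<inter> R) z) * chi (S - R) x) = f (merge R z x)" by simp
  qed
qed


lemma finite_qbasis[simp]: "finite (qbasis N M)" unfolding qbasis_def by simp

definition qsign :: "nat \<Rightarrow> nat \<times> nat \<Rightarrow> (nat \<Rightarrow> real) \<Rightarrow> real" where
  "qsign N b x = (if 1 \<le> fst b \<and> fst b \<le> N then chi {fst b - 1} x else 1)"

lemma query_op_cube: "x \<in> cube N \<Longrightarrow> query_op N x v b = complex_of_real (qsign N b x) * v b"
  using cube_01[of x N "fst b - 1"]
  by (cases b) (auto simp: query_op_def qsign_def chi_def)

lemma chipoly_qsign: "chipoly N 1 (qsign N b)"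
proof (cases "1 \<le> fst b \<and> fst b \<le> N")
  case True
  have "chipoly N 1 (\<lambda>x. 1 * chi {fst b - 1} x)" using True by (intro chipoly_chi) auto
  then show ?thesis by (rule chipoly_cong) (use True in \<open>auto simp: qsign_def\<close>)
next
  case False
  then have "qsign N b = (\<lambda>x. 1)" by (auto simp: qsign_def fun_eq_iff)
  then show ?thesis using chipoly_const[of N 1 1] by simp
qed

lemma chipoly_amp:
  "chipoly N t (\<lambda>x. Re (qrun N M Us x t a)) \<and> chipoly N t (\<lambda>x. Im (qrun N M Us x t a))"
proof (induction t arbitrary: a)
  case 0
  show ?case by (simp add: chipoly_const)
next
  case (Suc t)
  let ?B = "qbasis N M"
  have ReE: "\<And>x. x \<in> cube N \<Longrightarrow> Re (qrun N M Us x (Suc t) a) =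
     (\<Sum>b\<in>?B. (Re (Us (Suc t) a b) * qsign N b x) * Re (qrun N M Us x t b)
              + (- Im (Us (Suc t) a b) * qsign N b x) * Im (qrun N M Us x t b))"
    by (simp add: apply_op_def query_op_cube Re_sum algebra_simps)
  have ImE: "\<And>x. x \<in> cube N \<Longrightarrow> Im (qrun N M Us x (Suc t) a) =
     (\<Sum>b\<in>?B. (Re (Us (Suc t) a b) * qsign N b x) * Im (qrun N M Us x t b)
              + (Im (Us (Suc t) a b) * qsign N b x) * Re (qrun N M Us x t b))"
    by (simp add: apply_op_def query_op_cube Im_sum algebra_simps)
  have k: "chipoly N (Suc t) (\<lambda>x. (r * qsign N b x) * g x)" if "chipoly N t g" for r b g
  proof -
    have "chipoly N (1 + t) (\<lambda>x. (r * qsign N b x) * g x)"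
      by (rule chipoly_mult[OF chipoly_scale[OF chipoly_qsign] that])
    then show ?thesis by simp
  qed
  have h1: "chipoly N (Suc t) (\<lambda>x. \<Sum>b\<in>?B. (Re (Us (Suc t) a b) * qsign N b x) * Re (qrun N M Us x t b)
              + (- Im (Us (Suc t) a b) * qsign N b x) * Im (qrun N M Us x t b))"
    apply (rule chipoly_sum[OF finite_qbasis], rule chipoly_add)
     apply (rule k) using Suc.IH apply blast
    apply (rule k) using Suc.IH apply blast
    done

  have h2: "chipoly N (Suc t) (\<lambda>x. \<Sum>b\<in>?B. (Re (Us (Suc t) a b) * qsign N b x) * Im (qrun N M Us x t b)
              + (Im (Us (Suc t) a b) * qsign N b x) * Re (qrun N M Us x t b))"
    apply (rule chipoly_sum[OF finite_qbasis], rule chipoly_add)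
     apply (rule k) using Suc.IH apply blast
    apply (rule k) using Suc.IH apply blast
    done
  show ?case
  proof
    show "chipoly N (Suc t) (\<lambda>x. Re (qrun N M Us x (Suc t) a))"
      by (rule chipoly_cong[OF h1], rule ReE[symmetric])
    show "chipoly N (Suc t) (\<lambda>x. Im (qrun N M Us x (Suc t) a))"
      by (rule chipoly_cong[OF h2], rule ImE[symmetric])
  qed
qed

lemma chipoly_acc: assumes "Acc \<subseteq> qbasis N M" shows "chipoly N (2 * T) (acc_prob N M Us Acc T)"
proof -
  have fA: "finite Acc" using finite_subset[OF assms] by simp
  have "chipoly N (2 * T) (\<lambda>x. \<Sum>a\<in>Acc. Re (qrun N M Us x T a) * Re (qrun N M Us x T a)
                                   + Im (qrun N M Us x T a) * Im (qrun N M Us x T a))"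
  proof (rule chipoly_sum[OF fA], rule chipoly_add)
    fix a
    show "chipoly N (2 * T) (\<lambda>x. Re (qrun N M Us x T a) * Re (qrun N M Us x T a))"
    proof -
      have "chipoly N (T + T) (\<lambda>x. Re (qrun N M Us x T a) * Re (qrun N M Us x T a))"
        by (rule chipoly_mult[OF chipoly_amp[THEN conjunct1] chipoly_amp[THEN conjunct1]])
      then show ?thesis by (simp only: mult_2)
    qed
    show "chipoly N (2 * T) (\<lambda>x. Im (qrun N M Us x T a) * Im (qrun N M Us x T a))"
    proof -
      have "chipoly N (T + T) (\<lambda>x. Im (qrun N M Us x T a) * Im (qrun N M Us x T a))"
        by (rule chipoly_mult[OF chipoly_amp[THEN conjunct2] chipoly_amp[THEN conjunct2]])
      then show ?thesis by (simp only: mult_2)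
    qed
  qed
  then show ?thesis by (rule chipoly_cong) (simp only: acc_prob_def cmod_power2 flip: power2_eq_square)
qed


definition nrm :: "(nat \<times> nat) set \<Rightarrow> qstate \<Rightarrow> real" where
  "nrm B v = (\<Sum>a\<in>B. (cmod (v a))\<^sup>2)"

lemma nrm_complex: "complex_of_real (nrm B v) = (\<Sum>a\<in>B. v a * cnj (v a))"
  unfolding nrm_def of_real_sum by (intro sum.cong refl) (rule complex_norm_square)

lemma apply_op_nrm: assumes fB: "finite B" and U: "unitary_on B U"
  shows "nrm B (apply_op B U v) = nrm B v"
proof -
  have "complex_of_real (nrm B (apply_op B U v))
      = (\<Sum>a\<in>B. (\<Sum>b\<in>B. U a b * v b) * cnj (\<Sum>c\<in>B. U a c * v c))"
    unfolding nrm_complex apply_op_def by (rule refl)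
  also have "\<dots> = (\<Sum>a\<in>B. \<Sum>b\<in>B. \<Sum>c\<in>B. (v b * cnj (v c)) * (cnj (U a c) * U a b))"
    unfolding cnj_sum complex_cnj_mult sum_product by (simp only: ac_simps)
  also have "\<dots> = (\<Sum>b\<in>B. \<Sum>a\<in>B. \<Sum>c\<in>B. (v b * cnj (v c)) * (cnj (U a c) * U a b))"
    by (rule sum.swap)
  also have "\<dots> = (\<Sum>b\<in>B. \<Sum>c\<in>B. \<Sum>a\<in>B. (v b * cnj (v c)) * (cnj (U a c) * U a b))"
    by (rule sum.cong[OF refl], rule sum.swap)
  also have "\<dots> = (\<Sum>b\<in>B. \<Sum>c\<in>B. (v b * cnj (v c)) * (\<Sum>a\<in>B. cnj (U a c) * U a b))"
    by (simp only: sum_distrib_left)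
  also have "\<dots> = (\<Sum>b\<in>B. \<Sum>c\<in>B. if c = b then v b * cnj (v c) else 0)"
    using U unfolding unitary_on_def by (intro sum.cong refl) auto
  also have "\<dots> = (\<Sum>b\<in>B. v b * cnj (v b))"
    using fB by simp
  also have "\<dots> = complex_of_real (nrm B v)" by (simp only: nrm_complex)
  finally show ?thesis by (simp only: of_real_eq_iff)
qed

lemma query_op_nrm: "nrm B (query_op N x v) = nrm B v"
  unfolding nrm_def query_op_def by (intro sum.cong refl) (auto split: prod.splits)

lemma qrun_nrm: assumes "M \<ge> 1" "\<forall>t\<le>T. unitary_on (qbasis N M) (Us t)" "t \<le> T"
  shows "nrm (qbasis N M) (qrun N M Us x t) = 1"
  using assms(3)
proof (induction t)
  case 0
  have "nrm (qbasis N M) (qrun N M Us x 0) = nrm (qbasis N M) (\<lambda>a. if a = (0, 0) then 1 else 0)"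
    using assms by (simp add: apply_op_nrm)
  also have "\<dots> = (\<Sum>a\<in>qbasis N M. if a = (0, 0) then 1 else 0)"
    unfolding nrm_def by (intro sum.cong refl) auto
  also have "\<dots> = 1" using assms(1) by (simp add: qbasis_def)
  finally show ?case .
next
  case (Suc t)
  then show ?case using assms by (simp add: apply_op_nrm query_op_nrm)
qed

lemma acc_bounds: assumes "M \<ge> 1" "\<forall>t\<le>T. unitary_on (qbasis N M) (Us t)" "Acc \<subseteq> qbasis N M"
  shows "0 \<le> acc_prob N M Us Acc T x \<and> acc_prob N M Us Acc T x \<le> 1"
proof
  show "0 \<le> acc_prob N M Us Acc T x" unfolding acc_prob_def by (simp add: sum_nonneg)
  have "acc_prob N M Us Acc T x \<le> nrm (qbasis N M) (qrun N M Us x T)"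
    unfolding acc_prob_def nrm_def by (rule sum_mono2) (use assms(3) in auto)
  then show "acc_prob N M Us Acc T x \<le> 1" using qrun_nrm[OF assms(1,2) order_refl] by simp
qed


lemma is_poly_zero: "is_poly N d (\<lambda>x. 0)"
  unfolding is_poly_def by (rule exI[of _ "{}"]) simp

lemma is_poly_add: assumes "is_poly N d p" "is_poly N d q" shows "is_poly N d (\<lambda>x. p x + q x)"
proof -
  obtain A c where A: "finite A" "\<forall>\<alpha>\<in>A. (\<forall>i\<ge>N. \<alpha> i = 0) \<and> (\<Sum>i<N. \<alpha> i) \<le> d"
    "\<forall>x. p x = (\<Sum>\<alpha>\<in>A. c \<alpha> * (\<Prod>i<N. x i ^ \<alpha> i))" using assms(1) unfolding is_poly_def by blast
  obtain B e where B: "finite B" "\<forall>\<alpha>\<in>B. (\<forall>i\<ge>N. \<alpha> i = 0) \<and> (\<Sum>i<N. \<alpha> i) \<le> d"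
    "\<forall>x. q x = (\<Sum>\<alpha>\<in>B. e \<alpha> * (\<Prod>i<N. x i ^ \<alpha> i))" using assms(2) unfolding is_poly_def by blast
  define c' where "c' \<alpha> = (if \<alpha> \<in> A then c \<alpha> else 0) + (if \<alpha> \<in> B then e \<alpha> else 0)" for \<alpha>
  have "p x + q x = (\<Sum>\<alpha>\<in>A \<union> B. c' \<alpha> * (\<Prod>i<N. x i ^ \<alpha> i))" for x
  proof -
    have "(\<Sum>\<alpha>\<in>A \<union> B. c' \<alpha> * (\<Prod>i<N. x i ^ \<alpha> i)) =
       (\<Sum>\<alpha>\<in>A \<union> B. if \<alpha> \<in> A then c \<alpha> * (\<Prod>i<N. x i ^ \<alpha> i) else 0) +
       (\<Sum>\<alpha>\<in>A \<union> B. if \<alpha> \<in> B then e \<alpha> * (\<Prod>i<N. x i ^ \<alpha> i) else 0)"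
      unfolding sum.distrib[symmetric] c'_def by (intro sum.cong refl) (auto simp: distrib_right)
    also have "\<dots> = (\<Sum>\<alpha>\<in>A. c \<alpha> * (\<Prod>i<N. x i ^ \<alpha> i)) + (\<Sum>\<alpha>\<in>B. e \<alpha> * (\<Prod>i<N. x i ^ \<alpha> i))"
    proof -
      have fu: "finite (A \<union> B)" using A(1) B(1) by simp
      have "(A \<union> B) \<inter> A = A" "(A \<union> B) \<inter> B = B" by auto
      then show ?thesis
        using sum.inter_restrict[OF fu, of "\<lambda>\<alpha>. c \<alpha> * (\<Prod>i<N. x i ^ \<alpha> i)" A]
          sum.inter_restrict[OF fu, of "\<lambda>\<alpha>. e \<alpha> * (\<Prod>i<N. x i ^ \<alpha> i)" B] by simp
    qed
    finally show ?thesis using A(3) B(3) by simp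
  qed
  then show ?thesis unfolding is_poly_def using A B
    by (intro exI[of _ "A \<union> B"] exI[of _ c']) auto
qed

lemma is_poly_scale: assumes "is_poly N d p" shows "is_poly N d (\<lambda>x. a * p x)"
proof -
  obtain A c where A: "finite A" "\<forall>\<alpha>\<in>A. (\<forall>i\<ge>N. \<alpha> i = 0) \<and> (\<Sum>i<N. \<alpha> i) \<le> d"
    "\<forall>x. p x = (\<Sum>\<alpha>\<in>A. c \<alpha> * (\<Prod>i<N. x i ^ \<alpha> i))" using assms(1) unfolding is_poly_def by blast
  show ?thesis unfolding is_poly_def using A
    by (intro exI[of _ A] exI[of _ "\<lambda>\<alpha>. a * c \<alpha>"]) (simp add: sum_distrib_left mult.assoc)
qed

lemma is_poly_sum: assumes "finite I" "\<And>i. i \<in> I \<Longrightarrow> is_poly N d (p i)"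
  shows "is_poly N d (\<lambda>x. \<Sum>i\<in>I. p i x)"
  using assms
proof (induction I rule: finite_induct)
  case empty then show ?case by (simp add: is_poly_zero)
next
  case (insert i I)
  have "is_poly N d (\<lambda>x. p i x + (\<Sum>i\<in>I. p i x))"
    by (rule is_poly_add) (use insert in auto)
  then show ?case using insert(1,2) by (simp add: sum.insert)
qed

lemma is_poly_monom: assumes "T \<subseteq> {..<N}" "card T \<le> d" shows "is_poly N d (\<lambda>x. \<Prod>i\<in>T. x i)"
proof -
  define \<alpha> where "\<alpha> i = (if i \<in> T then 1 else 0::nat)" for i
  have fT: "finite T" using assms(1) finite_subset by (metis finite_lessThan)
  have 1: "(\<Prod>i<N. x i ^ \<alpha> i) = (\<Prod>i\<in>T. x i)" for x :: "nat \<Rightarrow> real"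
  proof -
    have "(\<Prod>i<N. x i ^ \<alpha> i) = (\<Prod>i<N. if i \<in> T then x i else 1)"
      unfolding \<alpha>_def by (intro prod.cong) auto
    also have "\<dots> = (\<Prod>i\<in>{..<N} \<inter> T. x i)" by (simp add: prod.inter_restrict)
    also have "{..<N} \<inter> T = T" using assms(1) by auto
    finally show ?thesis .
  qed
  have 2: "(\<Sum>i<N. \<alpha> i) = card T"
  proof -
    have "(\<Sum>i<N. \<alpha> i) = (\<Sum>i<N. if i \<in> T then 1 else 0)" unfolding \<alpha>_def by simp
    also have "\<dots> = card ({..<N} \<inter> T)" using sum.inter_restrict[of "{..<N}" "\<lambda>_. 1::nat" T] by simp
    also have "{..<N} \<inter> T = T" using assms(1) by auto
    finally show ?thesis .
  qed
  have 3: "\<forall>i\<ge>N. \<alpha> i = 0" using assms(1) unfolding \<alpha>_def by auto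
  show ?thesis unfolding is_poly_def
    apply (rule exI[of _ "{\<alpha>}"], rule exI[of _ "\<lambda>_. 1"])
    using 1 2 3 assms(2) by auto
qed

lemma is_poly_chi: assumes "S \<subseteq> {..<N}" "card S \<le> d" shows "is_poly N d (chi S)"
proof -
  have fS: "finite S" using assms(1) finite_subset by (metis finite_lessThan)
  have "chi S x = (\<Sum>T\<in>Pow S. (-2) ^ card T * (\<Prod>i\<in>T. x i))" for x
  proof -
    have "chi S x = (\<Prod>i\<in>S. (-2) * x i + 1)" unfolding chi_def by (intro prod.cong) auto
    also have "\<dots> = (\<Sum>T\<in>Pow S. (\<Prod>i\<in>T. (-2) * x i) * (\<Prod>i\<in>S - T. 1))"
      by (rule prod_add[OF fS])
    also have "\<dots> = (\<Sum>T\<in>Pow S. (-2) ^ card T * (\<Prod>i\<in>T. x i))"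
      by (intro sum.cong refl) (simp only: prod.distrib prod_constant power_one mult_1_right)
    finally show ?thesis .
  qed
  then have eq: "chi S = (\<lambda>x. \<Sum>T\<in>Pow S. (-2) ^ card T * (\<Prod>i\<in>T. x i))" by (rule ext)
  have "is_poly N d (\<lambda>x. \<Sum>T\<in>Pow S. (-2) ^ card T * (\<Prod>i\<in>T. x i))"
  proof (rule is_poly_sum, simp add: fS, rule is_poly_scale, rule is_poly_monom)
    fix T assume "T \<in> Pow S"
    then show "T \<subseteq> {..<N}" "card T \<le> d" using assms card_mono[OF fS, of T] by auto
  qed
  then show ?thesis by (simp only: eq)
qed

lemma chipoly_is_poly: assumes "chipoly N d f" shows "\<exists>p. is_poly N d p \<and> (\<forall>x\<in>cube N. p x = f x)"
proof -
  obtain c where c: "\<forall>x\<in>cube N. f x = (\<Sum>S\<in>sets N d. c S * chi S x)" using assms unfolding chipoly_def by blast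
  have "is_poly N d (\<lambda>x. \<Sum>S\<in>sets N d. c S * chi S x)"
    by (rule is_poly_sum[OF finite_sets], rule is_poly_scale, rule is_poly_chi) (auto simp: sets_def)
  then show ?thesis using c by auto
qed


lemma sq_sum: "(\<Sum>x\<in>cube N. (\<Sum>S\<in>sets N d. a S * chi S x)\<^sup>2) = 2 ^ N * (\<Sum>S\<in>sets N d. (a S)\<^sup>2)"
proof -
  have "(\<Sum>x\<in>cube N. (\<Sum>S\<in>sets N d. a S * chi S x)\<^sup>2)
     = (\<Sum>x\<in>cube N. \<Sum>S\<in>sets N d. \<Sum>T\<in>sets N d. (a S * a T) * (chi S x * chi T x))"
    by (simp only: power2_eq_square sum_product ac_simps)
  also have "\<dots> = (\<Sum>S\<in>sets N d. \<Sum>x\<in>cube N. \<Sum>T\<in>sets N d. (a S * a T) * (chi S x * chi T x))"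
    by (rule sum.swap)
  also have "\<dots> = (\<Sum>S\<in>sets N d. \<Sum>T\<in>sets N d. \<Sum>x\<in>cube N. (a S * a T) * (chi S x * chi T x))"
    by (rule sum.cong[OF refl], rule sum.swap)
  also have "\<dots> = (\<Sum>S\<in>sets N d. \<Sum>T\<in>sets N d. (a S * a T) * (\<Sum>x\<in>cube N. chi S x * chi T x))"
    by (simp only: sum_distrib_left)
  also have "\<dots> = (\<Sum>S\<in>sets N d. \<Sum>T\<in>sets N d. if S = T then (a S * a T) * 2 ^ N else 0)"
    by (intro sum.cong refl) (auto simp: chi_orth sets_def)
  also have "\<dots> = (\<Sum>S\<in>sets N d. (a S * a S) * 2 ^ N)"
    by simp
  also have "\<dots> = 2 ^ N * (\<Sum>S\<in>sets N d. (a S)\<^sup>2)"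
    by (simp add: sum_distrib_left power2_eq_square mult.commute)
  finally show ?thesis .
qed

lemma total_inf:
  assumes "chipoly N d f" "\<forall>x\<in>cube N. \<bar>f x\<bar> \<le> 1"
  shows "(\<Sum>k<N. \<Sum>x\<in>cube N. (f x - f (flip k x))\<^sup>2) \<le> 4 * real d * 2 ^ N"
proof -
  obtain c where c: "\<forall>x\<in>cube N. f x = (\<Sum>S\<in>sets N d. c S * chi S x)" using assms unfolding chipoly_def by blast
  have fin: "S \<in> sets N d \<Longrightarrow> finite S" for S unfolding sets_def using finite_subset[of S "{..<N}"] by auto
  have diff: "f x - f (flip k x) = (\<Sum>S\<in>sets N d. (2 * (if k \<in> S then c S else 0)) * chi S x)"
    if x: "x \<in> cube N" and k: "k < N" for x k
  proof -
    have "f x - f (flip k x) = (\<Sum>S\<in>sets N d. c S * chi S x) - (\<Sum>S\<in>sets N d. c S * chi S (flip k x))"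
      using c x flip_cube[OF x k] by simp
    also have "\<dots> = (\<Sum>S\<in>sets N d. c S * chi S x - c S * chi S (flip k x))"
      by (simp only: sum_subtractf)
    also have "\<dots> = (\<Sum>S\<in>sets N d. (2 * (if k \<in> S then c S else 0)) * chi S x)"
      by (intro sum.cong refl) (auto simp: chi_flip fin)
    finally show ?thesis .
  qed
  have "(\<Sum>k<N. \<Sum>x\<in>cube N. (f x - f (flip k x))\<^sup>2)
      = (\<Sum>k<N. 2 ^ N * (\<Sum>S\<in>sets N d. (2 * (if k \<in> S then c S else 0))\<^sup>2))"
    by (intro sum.cong refl) (simp add: diff sq_sum)
  also have "\<dots> = (\<Sum>k<N. 4 * 2 ^ N * (\<Sum>S\<in>sets N d. if k \<in> S then (c S)\<^sup>2 else 0))"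
    by (intro sum.cong refl) (auto simp: sum_distrib_left power2_eq_square intro!: sum.cong)
  also have "\<dots> = 4 * 2 ^ N * (\<Sum>S\<in>sets N d. \<Sum>k<N. if k \<in> S then (c S)\<^sup>2 else 0)"
    unfolding sum_distrib_left[symmetric] by (subst sum.swap) (rule refl)
  also have "\<dots> = 4 * 2 ^ N * (\<Sum>S\<in>sets N d. real (card S) * (c S)\<^sup>2)"
  proof -
    have "(\<Sum>k<N. if k \<in> S then (c S)\<^sup>2 else 0) = real (card S) * (c S)\<^sup>2" if "S \<in> sets N d" for S
    proof -
      have "(\<Sum>k<N. if k \<in> S then (c S)\<^sup>2 else 0) = (\<Sum>k\<in>{..<N} \<inter> S. (c S)\<^sup>2)"
        using sum.inter_restrict[of "{..<N}" "\<lambda>_. (c S)\<^sup>2" S] by simp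
      also have "{..<N} \<inter> S = S" using that by (auto simp: sets_def)
      finally show ?thesis by simp
    qed
    then show ?thesis by (intro arg_cong[where f="\<lambda>t. 4 * 2 ^ N * t"] sum.cong) auto
  qed
  also have "\<dots> \<le> 4 * 2 ^ N * (\<Sum>S\<in>sets N d. real d * (c S)\<^sup>2)"
    by (intro mult_left_mono sum_mono mult_right_mono) (auto simp: sets_def)
  also have "\<dots> = 4 * real d * (2 ^ N * (\<Sum>S\<in>sets N d. (c S)\<^sup>2))"
    by (simp add: sum_distrib_left) (simp add: ac_simps)
  also have "2 ^ N * (\<Sum>S\<in>sets N d. (c S)\<^sup>2) = (\<Sum>x\<in>cube N. (f x)\<^sup>2)"
    using sq_sum[where a=c and N=N and d=d] c by simp
  also have "(\<Sum>x\<in>cube N. (f x)\<^sup>2) \<le> (\<Sum>x\<in>cube N. 1)"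
  proof (rule sum_mono)
    fix x assume "x \<in> cube N"
    then have "\<bar>f x\<bar> \<le> 1" using assms(2) by auto
    then show "(f x)\<^sup>2 \<le> 1" by (simp add: abs_square_le_1)
  qed
  also have "(\<Sum>x\<in>cube N. 1::real) = 2 ^ N" by (simp add: card_cube)
  finally show ?thesis by (simp add: mult_left_mono)
qed


definition Qc :: "nat \<Rightarrow> nat set \<Rightarrow> (nat \<Rightarrow> real) \<Rightarrow> (nat \<Rightarrow> real) set" where
  "Qc N R z = {x \<in> cube N. \<forall>i\<in>R. x i = z i}"

lemma finite_Qc[simp]: "finite (Qc N R z)"
  unfolding Qc_def by simp

lemma Qc_sub: "Qc N R z \<subseteq> cube N" unfolding Qc_def by auto

lemma z_in_Qc: "z \<in> cube N \<Longrightarrow> z \<in> Qc N R z" unfolding Qc_def by auto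

lemma Qc_insert: "Qc N (insert j R) (z(j := b)) = {x \<in> Qc N R z. x j = b}" if "j \<notin> R"
  using that unfolding Qc_def by auto

lemma Qc_split: assumes "j \<notin> R"
  shows "Qc N R z = Qc N (insert j R) (z(j := 0)) \<union> Qc N (insert j R) (z(j := 1))"
    and "Qc N (insert j R) (z(j := 0)) \<inter> Qc N (insert j R) (z(j := 1)) = {}"
  using cube_01 unfolding Qc_insert[OF assms] by (auto simp: Qc_def)

lemma half_sum: fixes g :: "(nat \<Rightarrow> real) \<Rightarrow> real" assumes "j < N" "b = 0 \<or> b = 1"
  shows "(\<Sum>x\<in>cube N. g (x(j := b))) = 2 * (\<Sum>x\<in>{x\<in>cube N. x j = b}. g x)"
proof -
  let ?C = "{x\<in>cube N. x j = b}" and ?D = "{x\<in>cube N. x j = 1 - b}"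
  have "x \<in> ?C \<or> x \<in> ?D" if "x \<in> cube N" for x using cube_01[OF that, of j] assms(2) that by auto
  then have split: "cube N = ?C \<union> ?D" by auto
  have disj: "?C \<inter> ?D = {}" using assms(2) by auto
  have "(\<Sum>x\<in>cube N. g (x(j := b))) = (\<Sum>x\<in>?C \<union> ?D. g (x(j := b)))"
    by (simp only: split[symmetric])
  also have "\<dots> = (\<Sum>x\<in>?C. g (x(j := b))) + (\<Sum>x\<in>?D. g (x(j := b)))"
    by (rule sum.union_disjoint) (auto simp: disj)
  also have "(\<Sum>x\<in>?C. g (x(j := b))) = (\<Sum>x\<in>?C. g x)"
    by (intro sum.cong refl) (auto simp: fun_upd_idem)
  also have "(\<Sum>x\<in>?D. g (x(j := b))) = (\<Sum>x\<in>?D. g (flip j x))"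
    by (intro sum.cong refl) (auto simp: flip_def)
  also have "\<dots> = (\<Sum>x\<in>?C. g x)"
    by (rule sum.reindex_bij_witness[of _ "flip j" "flip j"]) (auto simp: flip_cube assms(1))
  finally show ?thesis by (simp only: mult_2)
qed

lemma merge_empty[simp]: "merge {} z x = x" unfolding merge_def by simp

lemma merge_insert: "merge (insert j R) z x = merge R z (x(j := z j))"
  unfolding merge_def by (auto simp: fun_eq_iff)

lemma transfer: fixes h :: "(nat \<Rightarrow> real) \<Rightarrow> real" assumes "R \<subseteq> {..<N}" "z \<in> cube N"
  shows "(\<Sum>x\<in>cube N. h (merge R z x)) = 2 ^ card R * (\<Sum>y\<in>Qc N R z. h y)"
proof -
  have fR: "finite R" using assms(1) finite_subset by (metis finite_lessThan)
  show ?thesis using fR assms(1)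
  proof (induction R arbitrary: h rule: finite_induct)
    case empty
    then show ?case by (simp add: Qc_def)
  next
    case (insert j R)
    have jN: "j < N" using insert by auto
    have zj: "z j = 0 \<or> z j = 1" using cube_01[OF assms(2)] .
    let ?h = "\<lambda>y. if y j = z j then h y else 0"
    have "(\<Sum>x\<in>cube N. h (merge (insert j R) z x)) = (\<Sum>x\<in>cube N. h (merge R z (x(j := z j))))"
      by (simp add: merge_insert)
    also have "\<dots> = 2 * (\<Sum>x\<in>{x\<in>cube N. x j = z j}. h (merge R z x))"
      by (rule half_sum[OF jN zj])
    also have "(\<Sum>x\<in>{x\<in>cube N. x j = z j}. h (merge R z x)) = (\<Sum>x\<in>cube N. ?h (merge R z x))"
      using insert(2) by (simp add: sum.inter_filter[symmetric] merge_def)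
    also have "\<dots> = 2 ^ card R * (\<Sum>y\<in>Qc N R z. ?h y)"
      using insert by simp
    also have "(\<Sum>y\<in>Qc N R z. ?h y) = (\<Sum>y\<in>Qc N (insert j R) z. h y)"
    proof -
      have "(\<Sum>y\<in>Qc N R z. ?h y) = (\<Sum>y\<in>{y\<in>Qc N R z. y j = z j}. h y)"
        by (simp add: sum.inter_filter)
      also have "{y\<in>Qc N R z. y j = z j} = Qc N (insert j R) z" unfolding Qc_def by auto
      finally show ?thesis .
    qed
    finally show ?case using insert(1,2) by simp
  qed
qed

lemma card_Qc: assumes "R \<subseteq> {..<N}" "z \<in> cube N"
  shows "2 ^ N = 2 ^ card R * real (card (Qc N R z))"
  using transfer[OF assms, of "\<lambda>_. 1"] by (simp add: card_cube)

lemma card_Qc_pos: assumes "z \<in> cube N" shows "card (Qc N R z) > 0"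
  using z_in_Qc[OF assms] by (auto simp: card_gt_0_iff)


definition Pot :: "nat \<Rightarrow> ((nat \<Rightarrow> real) \<Rightarrow> real) \<Rightarrow> nat set \<Rightarrow> (nat \<Rightarrow> real) \<Rightarrow> real" where
  "Pot N f R z = (\<Sum>k\<in>{..<N} - R. \<Sum>x\<in>Qc N R z. (f x - f (flip k x))\<^sup>2)"

lemma Pot_nonneg: "0 \<le> Pot N f R z" unfolding Pot_def by (intro sum_nonneg) auto

lemma Pot_split: assumes "j < N" "j \<notin> R"
  shows "Pot N f R z = Pot N f (insert j R) (z(j := 0)) + Pot N f (insert j R) (z(j := 1))
           + (\<Sum>x\<in>Qc N R z. (f x - f (flip j x))\<^sup>2)"
proof -
  let ?H = "\<lambda>k x. (f x - f (flip k x))\<^sup>2"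
  let ?Q0 = "Qc N (insert j R) (z(j := 0))" and ?Q1 = "Qc N (insert j R) (z(j := 1))"
  have jK: "j \<in> {..<N} - R" using assms by auto
  have K: "{..<N} - R - {j} = {..<N} - insert j R" by auto
  have QS: "(\<Sum>x\<in>Qc N R z. ?H k x) = (\<Sum>x\<in>?Q0. ?H k x) + (\<Sum>x\<in>?Q1. ?H k x)" for k
  proof -
    have "(\<Sum>x\<in>Qc N R z. ?H k x) = (\<Sum>x\<in>?Q0 \<union> ?Q1. ?H k x)"
      by (simp only: Qc_split(1)[OF assms(2), symmetric])
    also have "\<dots> = (\<Sum>x\<in>?Q0. ?H k x) + (\<Sum>x\<in>?Q1. ?H k x)"
      by (rule sum.union_disjoint) (simp_all add: Qc_split(2)[OF assms(2)])
    finally show ?thesis .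
  qed
  have "Pot N f R z = (\<Sum>x\<in>Qc N R z. ?H j x) + (\<Sum>k\<in>{..<N} - R - {j}. \<Sum>x\<in>Qc N R z. ?H k x)"
    unfolding Pot_def by (rule sum.remove) (use jK in auto)
  also have "(\<Sum>k\<in>{..<N} - R - {j}. \<Sum>x\<in>Qc N R z. ?H k x)
      = (\<Sum>k\<in>{..<N} - insert j R. (\<Sum>x\<in>?Q0. ?H k x) + (\<Sum>x\<in>?Q1. ?H k x))"
    unfolding K QS by (rule refl)
  also have "\<dots> = Pot N f (insert j R) (z(j := 0)) + Pot N f (insert j R) (z(j := 1))"
    unfolding Pot_def by (rule sum.distrib)
  finally show ?thesis by simp
qed

lemma merge_flip_out: "k \<notin> R \<Longrightarrow> merge R z (flip k x) = flip k (merge R z x)"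
  unfolding merge_def flip_def by (auto simp: fun_eq_iff)

lemma merge_flip_in: "k \<in> R \<Longrightarrow> merge R z (flip k x) = merge R z x"
  unfolding merge_def flip_def by (auto simp: fun_eq_iff)

lemma Vr_merge: assumes "R \<subseteq> {..<N}" "z \<in> cube N"
  shows "Vr N (\<lambda>x. f (merge R z x)) =
     (\<Sum>x\<in>Qc N R z. \<Sum>y\<in>Qc N R z. \<bar>f x - f y\<bar>) / (real (card (Qc N R z)) * real (card (Qc N R z)))"
proof -
  let ?Q = "Qc N R z" and ?r = "card R"
  have "(\<Sum>x\<in>cube N. \<Sum>y\<in>cube N. \<bar>f (merge R z x) - f (merge R z y)\<bar>)
      = (\<Sum>x\<in>cube N. 2 ^ ?r * (\<Sum>y\<in>?Q. \<bar>f (merge R z x) - f y\<bar>))"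
    by (intro sum.cong refl) (rule transfer[OF assms, of "\<lambda>y. \<bar>f (merge R z _) - f y\<bar>"])
  also have "\<dots> = 2 ^ ?r * (\<Sum>x\<in>cube N. (\<Sum>y\<in>?Q. \<bar>f (merge R z x) - f y\<bar>))"
    by (simp add: sum_distrib_left)
  also have "(\<Sum>x\<in>cube N. (\<Sum>y\<in>?Q. \<bar>f (merge R z x) - f y\<bar>)) = 2 ^ ?r * (\<Sum>x\<in>?Q. \<Sum>y\<in>?Q. \<bar>f x - f y\<bar>)"
    by (rule transfer[OF assms, of "\<lambda>u. \<Sum>y\<in>?Q. \<bar>f u - f y\<bar>"])
  finally have 1: "(\<Sum>x\<in>cube N. \<Sum>y\<in>cube N. \<bar>f (merge R z x) - f (merge R z y)\<bar>)
      = 2 ^ ?r * 2 ^ ?r * (\<Sum>x\<in>?Q. \<Sum>y\<in>?Q. \<bar>f x - f y\<bar>)" by simp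
  have 2: "(2::real) ^ N = 2 ^ ?r * real (card ?Q)" by (rule card_Qc[OF assms])
  have p: "(2::real) ^ ?r > 0" by simp
  show ?thesis unfolding Vr_def 1 2 using p by (simp add: field_simps)
qed

lemma Inf_merge_out: assumes "R \<subseteq> {..<N}" "z \<in> cube N" "k \<notin> R"
  shows "Defs.Inf N k (\<lambda>x. f (merge R z x)) = (\<Sum>y\<in>Qc N R z. \<bar>f y - f (flip k y)\<bar>) / real (card (Qc N R z))"
proof -
  have "(\<Sum>x\<in>cube N. \<bar>f (merge R z x) - f (merge R z (flip k x))\<bar>)
      = (\<Sum>x\<in>cube N. \<bar>f (merge R z x) - f (flip k (merge R z x))\<bar>)"
    using assms(3) by (simp add: merge_flip_out)
  also have "\<dots> = 2 ^ card R * (\<Sum>y\<in>Qc N R z. \<bar>f y - f (flip k y)\<bar>)"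
    by (rule transfer[OF assms(1,2), of "\<lambda>y. \<bar>f y - f (flip k y)\<bar>"])
  finally have 1: "(\<Sum>x\<in>cube N. \<bar>f (merge R z x) - f (merge R z (flip k x))\<bar>)
      = 2 ^ card R * (\<Sum>y\<in>Qc N R z. \<bar>f y - f (flip k y)\<bar>)" .
  have 2: "(2::real) ^ N = 2 ^ card R * real (card (Qc N R z))" by (rule card_Qc[OF assms(1,2)])
  have p: "(2::real) ^ card R > 0" by simp
  show ?thesis unfolding Defs.Inf_def 1 2 using p by (simp add: field_simps)
qed

lemma Inf_merge_in: assumes "k \<in> R"
  shows "Defs.Inf N k (\<lambda>x. f (merge R z x)) = 0"
  unfolding Defs.Inf_def using assms by (simp add: merge_flip_in)

lemma markov: fixes a :: "'a \<Rightarrow> real"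
  assumes "finite A" "\<And>x. x \<in> A \<Longrightarrow> 0 \<le> a x" "0 \<le> e"
  shows "e * real (card {x\<in>A. e < a x}) \<le> sum a A"
proof -
  have "e * real (card {x\<in>A. e < a x}) = (\<Sum>x\<in>{x\<in>A. e < a x}. e)" by simp
  also have "\<dots> \<le> (\<Sum>x\<in>{x\<in>A. e < a x}. a x)" by (rule sum_mono) auto
  also have "\<dots> \<le> sum a A" by (rule sum_mono2) (use assms in auto)
  finally show ?thesis .
qed


definition VrQ :: "nat \<Rightarrow> ((nat \<Rightarrow> real) \<Rightarrow> real) \<Rightarrow> nat set \<Rightarrow> (nat \<Rightarrow> real) \<Rightarrow> real" where
  "VrQ N f R z = (\<Sum>x\<in>Qc N R z. \<Sum>y\<in>Qc N R z. \<bar>f x - f y\<bar>) / (real (card (Qc N R z)) * real (card (Qc N R z)))"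

lemma leaf_dev:
  assumes "z \<in> cube N" "VrQ N f R z < e1" "0 < e"
  shows "e * real (card {x \<in> Qc N R z. e < \<bar>(\<Sum>y\<in>Qc N R z. f y) / real (card (Qc N R z)) - f x\<bar>})
          \<le> e1 * real (card (Qc N R z))"
proof -
  let ?Q = "Qc N R z"
  let ?q = "real (card ?Q)"
  let ?m = "(\<Sum>y\<in>?Q. f y) / ?q"
  have q: "?q > 0" using card_Qc_pos[OF assms(1)] by simp
  have dev: "\<bar>?m - f x\<bar> \<le> (\<Sum>y\<in>?Q. \<bar>f x - f y\<bar>) / ?q" for x
  proof -
    have s: "(\<Sum>y\<in>?Q. f y - f x) = (\<Sum>y\<in>?Q. f y) - ?q * f x" by (simp add: sum_subtractf)
    have "?m - f x = (\<Sum>y\<in>?Q. f y - f x) / ?q"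
      unfolding s using q z_in_Qc[OF assms(1), of R] by (auto simp: diff_divide_distrib)
    then have "\<bar>?m - f x\<bar> = \<bar>\<Sum>y\<in>?Q. f y - f x\<bar> / ?q" using q by simp
    also have "\<dots> \<le> (\<Sum>y\<in>?Q. \<bar>f y - f x\<bar>) / ?q"
      using q by (intro divide_right_mono sum_abs) auto
    also have "(\<Sum>y\<in>?Q. \<bar>f y - f x\<bar>) = (\<Sum>y\<in>?Q. \<bar>f x - f y\<bar>)" by (simp add: abs_minus_commute)
    finally show ?thesis .
  qed
  have "e * real (card {x \<in> ?Q. e < \<bar>?m - f x\<bar>}) \<le> (\<Sum>x\<in>?Q. \<bar>?m - f x\<bar>)"
    by (rule markov) (use assms in auto)
  also have "\<dots> \<le> (\<Sum>x\<in>?Q. (\<Sum>y\<in>?Q. \<bar>f x - f y\<bar>) / ?q)"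
    by (rule sum_mono) (rule dev)
  also have "\<dots> = VrQ N f R z * ?q"
    unfolding VrQ_def using q by (simp add: sum_divide_distrib[symmetric] field_simps)
  also have "\<dots> \<le> e1 * ?q" using assms(2) q by (intro mult_right_mono) auto
  finally show ?thesis .
qed

lemma cs_step: assumes "finite A" "A \<noteq> {}" "0 \<le> t" "t * real (card A) \<le> (\<Sum>y\<in>A. \<bar>D y\<bar>)"
  shows "t\<^sup>2 * real (card A) \<le> (\<Sum>y\<in>A. (D y)\<^sup>2)"
proof -
  have c: "real (card A) > 0" using assms by auto
  have "(t * real (card A))\<^sup>2 \<le> (\<Sum>y\<in>A. \<bar>D y\<bar>)\<^sup>2"
    using assms(3,4) c by (intro power_mono) auto
  also have "\<dots> \<le> (\<Sum>y\<in>A. (\<bar>D y\<bar>)\<^sup>2) * real (card A)" by (rule sum_squared_le_sum_of_squares)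
  also have "\<dots> = (\<Sum>y\<in>A. (D y)\<^sup>2) * real (card A)" by simp
  finally have "(t\<^sup>2 * real (card A)) * real (card A) \<le> (\<Sum>y\<in>A. (D y)\<^sup>2) * real (card A)"
    by (simp add: power2_eq_square algebra_simps)
  then show ?thesis using c by simp
qed

lemma main_rec:
  fixes f :: "(nat \<Rightarrow> real) \<Rightarrow> real" and tau e e1 :: real
  assumes tau: "0 < tau" and e: "0 < e" and e1: "0 \<le> e1"
    and HC: "\<And>R z. R \<subseteq> {..<N} \<Longrightarrow> z \<in> cube N \<Longrightarrow> e1 \<le> VrQ N f R z \<Longrightarrow>
            \<exists>k<N. k \<notin> R \<and> tau * real (card (Qc N R z)) \<le> (\<Sum>y\<in>Qc N R z. \<bar>f y - f (flip k y)\<bar>)"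
  shows "R \<subseteq> {..<N} \<Longrightarrow> z \<in> cube N \<Longrightarrow> \<exists>tr U. dt_depth tr \<le> n \<and> U \<subseteq> Qc N R z \<and>
     tau\<^sup>2 * real n * real (card U) \<le> Pot N f R z \<and>
     e * real (card {x \<in> Qc N R z - U. e < \<bar>dt_eval tr x - f x\<bar>}) \<le> e1 * real (card (Qc N R z))"
proof (induction n arbitrary: R z)
  case 0
  show ?case
  proof (cases "VrQ N f R z < e1")
    case True
    let ?m = "(\<Sum>y\<in>Qc N R z. f y) / real (card (Qc N R z))"
    have "e * real (card {x \<in> Qc N R z - {}. e < \<bar>dt_eval (Leaf ?m) x - f x\<bar>}) \<le> e1 * real (card (Qc N R z))"
      using leaf_dev[OF 0(2) True e] by simp
    then show ?thesis using Pot_nonneg by (intro exI[of _ "Leaf ?m"] exI[of _ "{}"]) auto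
  next
    case False
    then show ?thesis using Pot_nonneg[of N f R z] e1
      by (intro exI[of _ "Leaf 0"] exI[of _ "Qc N R z"]) auto
  qed
next
  case (Suc n)
  show ?case
  proof (cases "VrQ N f R z < e1")
    case True
    let ?m = "(\<Sum>y\<in>Qc N R z. f y) / real (card (Qc N R z))"
    have "e * real (card {x \<in> Qc N R z - {}. e < \<bar>dt_eval (Leaf ?m) x - f x\<bar>}) \<le> e1 * real (card (Qc N R z))"
      using leaf_dev[OF Suc(3) True e] by simp
    then show ?thesis using Pot_nonneg by (intro exI[of _ "Leaf ?m"] exI[of _ "{}"]) auto
  next
    case False
    then obtain k where k: "k < N" "k \<notin> R"
      and infl: "tau * real (card (Qc N R z)) \<le> (\<Sum>y\<in>Qc N R z. \<bar>f y - f (flip k y)\<bar>)"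
      using HC[OF Suc(2,3)] by force
    let ?Q = "Qc N R z"
    let ?QA = "Qc N (insert k R) (z(k := 0))" and ?QB = "Qc N (insert k R) (z(k := 1))"
    have R': "insert k R \<subseteq> {..<N}" using k Suc(2) by auto
    have z0: "z(k := 0) \<in> cube N" and z1: "z(k := 1) \<in> cube N"
      using Suc(3) k unfolding cube_def by auto
    obtain tr0 U0 where h0: "dt_depth tr0 \<le> n" "U0 \<subseteq> ?QA" "tau\<^sup>2 * real n * real (card U0) \<le> Pot N f (insert k R) (z(k := 0))"
      "e * real (card {x \<in> ?QA - U0. e < \<bar>dt_eval tr0 x - f x\<bar>}) \<le> e1 * real (card ?QA)"
      using Suc.IH[OF R' z0] by blast
    obtain tr1 U1 where h1: "dt_depth tr1 \<le> n" "U1 \<subseteq> ?QB" "tau\<^sup>2 * real n * real (card U1) \<le> Pot N f (insert k R) (z(k := 1))"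
      "e * real (card {x \<in> ?QB - U1. e < \<bar>dt_eval tr1 x - f x\<bar>}) \<le> e1 * real (card ?QB)"
      using Suc.IH[OF R' z1] by blast
    have split: "?Q = ?QA \<union> ?QB" "?QA \<inter> ?QB = {}"
      by (rule Qc_split(1)[OF k(2)], rule Qc_split(2)[OF k(2)])
    have cardQ: "card ?Q = card ?QA + card ?QB" using split by (simp add: card_Un_disjoint)
    let ?tr = "Query k tr0 tr1" and ?U = "U0 \<union> U1"
    have fU: "finite U0" "finite U1" using h0(2) h1(2) finite_subset by (metis finite_Qc)+
    have dU: "U0 \<inter> U1 = {}" using h0(2) h1(2) split(2) by auto
    have cardU: "card ?U = card U0 + card U1" using fU dU by (simp add: card_Un_disjoint)
    have UQ: "?U \<subseteq> ?Q" using h0(2) h1(2) split(1) by auto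
    have cardUQ: "card ?U \<le> card ?Q" using card_mono[OF finite_Qc UQ] .
    have Qne: "?Q \<noteq> {}" using z_in_Qc[OF Suc(3)] by auto
    have cs: "tau\<^sup>2 * real (card ?Q) \<le> (\<Sum>y\<in>?Q. (f y - f (flip k y))\<^sup>2)"
      using cs_step[OF finite_Qc Qne _ infl] tau by simp
    have pot: "Pot N f R z = Pot N f (insert k R) (z(k := 0)) + Pot N f (insert k R) (z(k := 1))
           + (\<Sum>x\<in>?Q. (f x - f (flip k x))\<^sup>2)" by (rule Pot_split[OF k])
    have A: "tau\<^sup>2 * real (Suc n) * real (card ?U) \<le> Pot N f R z"
    proof -
      have "tau\<^sup>2 * real (Suc n) * real (card ?U) = tau\<^sup>2 * real n * real (card U0) + tau\<^sup>2 * real n * real (card U1)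
            + tau\<^sup>2 * real (card ?U)"
        unfolding cardU by (simp add: algebra_simps)
      also have "tau\<^sup>2 * real (card ?U) \<le> tau\<^sup>2 * real (card ?Q)"
        using cardUQ by (intro mult_left_mono) auto
      finally show ?thesis using h0(3) h1(3) cs pot by linarith
    qed
    have eval0: "x \<in> ?QA \<Longrightarrow> dt_eval ?tr x = dt_eval tr0 x" for x
      using Qc_insert[OF k(2)] by auto
    have eval1: "x \<in> ?QB \<Longrightarrow> dt_eval ?tr x = dt_eval tr1 x" for x
      using Qc_insert[OF k(2)] by auto
    have sub: "{x \<in> ?Q - ?U. e < \<bar>dt_eval ?tr x - f x\<bar>} \<subseteq>
        {x \<in> ?QA - U0. e < \<bar>dt_eval tr0 x - f x\<bar>} \<union> {x \<in> ?QB - U1. e < \<bar>dt_eval tr1 x - f x\<bar>}"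
    proof
      fix x assume "x \<in> {x \<in> ?Q - ?U. e < \<bar>dt_eval ?tr x - f x\<bar>}"
      then have x: "x \<in> ?Q" "x \<notin> U0" "x \<notin> U1" "e < \<bar>dt_eval ?tr x - f x\<bar>" by auto
      from x(1) split(1) have "x \<in> ?QA \<or> x \<in> ?QB" by auto
      then show "x \<in> {x \<in> ?QA - U0. e < \<bar>dt_eval tr0 x - f x\<bar>} \<union> {x \<in> ?QB - U1. e < \<bar>dt_eval tr1 x - f x\<bar>}"
      proof
        assume a: "x \<in> ?QA"
        have "e < \<bar>dt_eval tr0 x - f x\<bar>" using x(4) unfolding eval0[OF a] .
        then show ?thesis using a x(2) by blast
      next
        assume a: "x \<in> ?QB"
        have "e < \<bar>dt_eval tr1 x - f x\<bar>" using x(4) unfolding eval1[OF a] .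
        then show ?thesis using a x(3) by blast
      qed
    qed
    have "card {x \<in> ?Q - ?U. e < \<bar>dt_eval ?tr x - f x\<bar>} \<le>
        card ({x \<in> ?QA - U0. e < \<bar>dt_eval tr0 x - f x\<bar>} \<union> {x \<in> ?QB - U1. e < \<bar>dt_eval tr1 x - f x\<bar>})"
      by (rule card_mono[OF _ sub]) simp
    also have "\<dots> \<le> card {x \<in> ?QA - U0. e < \<bar>dt_eval tr0 x - f x\<bar>} + card {x \<in> ?QB - U1. e < \<bar>dt_eval tr1 x - f x\<bar>}"
      by (rule card_Un_le)
    finally have "e * real (card {x \<in> ?Q - ?U. e < \<bar>dt_eval ?tr x - f x\<bar>}) \<le>
        e * real (card {x \<in> ?QA - U0. e < \<bar>dt_eval tr0 x - f x\<bar>}) + e * real (card {x \<in> ?QB - U1. e < \<bar>dt_eval tr1 x - f x\<bar>})"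
      using e by (simp add: distrib_left[symmetric] mult_left_mono)
    also have "\<dots> \<le> e1 * real (card ?QA) + e1 * real (card ?QB)" using h0(4) h1(4) by linarith
    also have "\<dots> = e1 * real (card ?Q)" unfolding cardQ by (simp add: algebra_simps)
    finally have B: "e * real (card {x \<in> ?Q - ?U. e < \<bar>dt_eval ?tr x - f x\<bar>}) \<le> e1 * real (card ?Q)" .
    have D: "dt_depth ?tr \<le> Suc n" using h0(1) h1(1) by simp
    show ?thesis using A B D UQ by blast
  qed
qed


lemma bound:
  fixes c eps del :: real and T :: nat
  assumes c: "0 < c" and eps: "0 < eps" and del: "0 < del"
  defines "d \<equiv> real (2 * T + 1)" and "K \<equiv> 1 + real T + 1 / eps + 1 / del"
  defines "tau \<equiv> ((eps * del / 2) / d) powr c" and "m \<equiv> nat \<lceil>2 * c\<rceil>"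
  shows "real (nat \<lceil>8 * d / (tau\<^sup>2 * del)\<rceil>) \<le> (16 * 4 ^ m + 1) * K ^ (3 * m + 2)"
proof -
  have d1: "1 \<le> d" unfolding d_def by simp
  have K1: "1 \<le> K" unfolding K_def using eps del by simp
  have dK: "d \<le> 2 * K" unfolding d_def K_def using eps del by simp
  have eK: "1 / eps \<le> K" unfolding K_def using del by simp
  have dlK: "1 / del \<le> K" unfolding K_def using eps by simp
  define L where "L = d / (eps * del / 2)"
  have Lpos: "0 < L" unfolding L_def using d1 eps del by simp
  have tau2: "1 / tau\<^sup>2 = L powr (2 * c)"
  proof -
    have "tau\<^sup>2 = ((eps * del / 2) / d) powr (2 * c)"
      unfolding tau_def using d1 eps del by (simp add: powr_powr[symmetric] powr_mult_base power2_eq_square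
          powr_add[symmetric])
    also have "\<dots> = 1 / L powr (2 * c)" unfolding L_def using d1 eps del
      by (simp add: powr_divide) (simp add: mult.commute)
    finally show ?thesis using Lpos by simp
  qed
  have LB: "L \<le> 4 * K ^ 3"
  proof -
    have "L = 2 * d * (1 / eps) * (1 / del)" unfolding L_def by (simp add: field_simps)
    also have "\<dots> \<le> 2 * (2 * K) * K * K"
      using dK eK dlK d1 eps del by (intro mult_mono) auto
    finally show ?thesis by (simp add: power3_eq_cube)
  qed
  have "1 \<le> K ^ 3" using K1 by (rule one_le_power)
  then have B1: "1 \<le> 4 * K ^ 3" by linarith
  have "L powr (2 * c) \<le> (4 * K ^ 3) powr (2 * c)"
    using LB Lpos c by (intro powr_mono2) auto
  also have "\<dots> \<le> (4 * K ^ 3) powr (real m)"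
    using B1 unfolding m_def by (intro powr_mono) (auto, linarith)
  also have "\<dots> = (4 * K ^ 3) ^ m" using B1 by (intro powr_realpow) linarith
  also have "\<dots> = 4 ^ m * K ^ (3 * m)" by (simp add: power_mult_distrib power_mult)
  finally have Lp: "L powr (2 * c) \<le> 4 ^ m * K ^ (3 * m)" .
  have "8 * d / (tau\<^sup>2 * del) = 8 * d * (1 / del) * (1 / tau\<^sup>2)" by (simp add: field_simps)
  also have "\<dots> \<le> 8 * (2 * K) * K * (4 ^ m * K ^ (3 * m))"
    unfolding tau2 using dK dlK Lp d1 del by (intro mult_mono) auto
  also have "\<dots> = 16 * 4 ^ m * K ^ (3 * m + 2)" by (simp add: power_add power2_eq_square algebra_simps)
  finally have main: "8 * d / (tau\<^sup>2 * del) \<le> 16 * 4 ^ m * K ^ (3 * m + 2)" .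
  have X0: "0 \<le> 8 * d / (tau\<^sup>2 * del)" using d1 del by simp
  have cX: "\<And>X::real. 0 \<le> X \<Longrightarrow> real (nat \<lceil>X\<rceil>) \<le> X + 1"
  proof -
    fix X :: real assume "0 \<le> X"
    then have "0 \<le> \<lceil>X\<rceil>" by simp
    then have "real (nat \<lceil>X\<rceil>) = of_int \<lceil>X\<rceil>" by simp
    then show "real (nat \<lceil>X\<rceil>) \<le> X + 1" using of_int_ceiling_le_add_one[of X] by linarith
  qed
  have "real (nat \<lceil>8 * d / (tau\<^sup>2 * del)\<rceil>) \<le> 8 * d / (tau\<^sup>2 * del) + 1"
    by (rule cX[OF X0])
  also have "\<dots> \<le> 16 * 4 ^ m * K ^ (3 * m + 2) + K ^ (3 * m + 2)"
    using main one_le_power[OF K1, of "3 * m + 2"] by linarith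
  finally show ?thesis by (simp add: algebra_simps)
qed


theorem theorem21:
  assumes "bpiv_conjecture"
  shows "\<exists>C::real. \<exists>k::nat. \<forall>(\<epsilon>::real) (\<delta>::real) (N::nat) (M::nat) (T::nat) Us Acc.
           \<epsilon> > 0 \<longrightarrow> \<delta> > 0 \<longrightarrow> M \<ge> 1 \<longrightarrow>
           (\<forall>t\<le>T. unitary_on (qbasis N M) (Us t)) \<longrightarrow> Acc \<subseteq> qbasis N M \<longrightarrow>
           (\<exists>tr. real (dt_depth tr) \<le> C * (1 + real T + 1 / \<epsilon> + 1 / \<delta>) ^ k \<and>
                 real (card {x \<in> cube N. \<bar>dt_eval tr x - acc_prob N M Us Acc T x\<bar> \<le> \<epsilon>})
                   \<ge> (1 - \<delta>) * 2 ^ N)"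
proof -
  obtain c where c: "c > 0" and conj0: "\<forall>N d p e. d \<ge> 1 \<longrightarrow> e > 0 \<longrightarrow> is_poly N d p \<longrightarrow>
      (\<forall>x\<in>cube N. 0 \<le> p x \<and> p x \<le> 1) \<longrightarrow> Vr N p \<ge> e \<longrightarrow>
      (\<exists>i<N. Defs.Inf N i p \<ge> (e / real d) powr c)"
    using assms unfolding bpiv_conjecture_def by (elim exE conjE) (rule that)
  note conj = conj0[rule_format]
  define m where "m = nat \<lceil>2 * c\<rceil>"
  show ?thesis
  proof (rule exI[of _ "16 * 4 ^ m + 1"], rule exI[of _ "3 * m + 2"], intro allI impI)
    fix eps del :: real and N M T :: nat and Us Acc
    assume eps: "eps > 0" and del: "del > 0" and M: "M \<ge> 1"
      and U: "\<forall>t\<le>T. unitary_on (qbasis N M) (Us t)" and Acc: "Acc \<subseteq> qbasis N M"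
    define f where "f = acc_prob N M Us Acc T"
    define dn where "dn = 2 * T + 1"
    define e1 where "e1 = eps * del / 2"
    define tau where "tau = ((eps * del / 2) / real (2 * T + 1)) powr c"
    have tau': "tau = (e1 / real dn) powr c" unfolding tau_def e1_def dn_def ..
    have dn1: "dn \<ge> 1" unfolding dn_def by simp
    have fpoly: "chipoly N dn f"
      unfolding f_def dn_def by (rule chipoly_mono[OF chipoly_acc[OF Acc]]) simp
    have fb: "0 \<le> f x \<and> f x \<le> 1" for x unfolding f_def by (rule acc_bounds[OF M U Acc])
    have e1pos: "e1 > 0" unfolding e1_def using eps del by simp
    have taupos: "tau > 0" unfolding tau' using e1pos dn1 by simp
    have HC: "\<exists>k<N. k \<notin> R \<and> tau * real (card (Qc N R z)) \<le> (\<Sum>y\<in>Qc N R z. \<bar>f y - f (flip k y)\<bar>)"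
      if R: "R \<subseteq> {..<N}" and z: "z \<in> cube N" and V: "e1 \<le> VrQ N f R z" for R z
    proof -
      let ?g = "\<lambda>x. f (merge R z x)"
      have "chipoly N dn ?g" by (rule chipoly_merge[OF fpoly z])
      then obtain p where p: "is_poly N dn p" "\<forall>x\<in>cube N. p x = ?g x" using chipoly_is_poly by blast
      have pb: "\<forall>x\<in>cube N. 0 \<le> p x \<and> p x \<le> 1" using p(2) fb by auto
      have Vp: "Vr N p = Vr N ?g" unfolding Vr_def
        by (intro arg_cong2[where f="(/)"] sum.cong refl) (auto simp: p(2))
      have Vge: "Vr N p \<ge> e1" using Vp Vr_merge[OF R z, of f] V unfolding VrQ_def by simp
      then obtain i where i: "i < N" "Defs.Inf N i p \<ge> tau"
        using conj[OF dn1 e1pos p(1) pb[rule_format] Vge] unfolding tau' by blast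
      have Ip: "Defs.Inf N i p = Defs.Inf N i ?g" unfolding Defs.Inf_def
        by (intro arg_cong2[where f="(/)"] sum.cong refl) (auto simp: p(2) flip_cube i(1))
      have iR: "i \<notin> R"
      proof
        assume "i \<in> R"
        then have "Defs.Inf N i ?g = 0" by (rule Inf_merge_in)
        then show False using i(2) Ip taupos by simp
      qed
      have "tau \<le> (\<Sum>y\<in>Qc N R z. \<bar>f y - f (flip i y)\<bar>) / real (card (Qc N R z))"
        using i(2) Ip Inf_merge_out[OF R z iR, of f] by simp
      moreover have "real (card (Qc N R z)) > 0" using card_Qc_pos[OF z] by simp
      ultimately have "tau * real (card (Qc N R z)) \<le> (\<Sum>y\<in>Qc N R z. \<bar>f y - f (flip i y)\<bar>)"
        by (simp add: pos_le_divide_eq)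
      then show ?thesis using i(1) iR by blast
    qed
    define n where "n = nat \<lceil>8 * real (2 * T + 1) / (tau\<^sup>2 * del)\<rceil>"
    define z0 :: "nat \<Rightarrow> real" where "z0 = (\<lambda>_. 0)"
    have z0: "z0 \<in> cube N" unfolding cube_def z0_def by simp
    have Qall: "Qc N {} z0 = cube N" unfolding Qc_def by simp
    have ex: "\<exists>tr U. dt_depth tr \<le> n \<and> U \<subseteq> Qc N {} z0 \<and>
     tau\<^sup>2 * real n * real (card U) \<le> Pot N f {} z0 \<and>
     eps * real (card {x \<in> Qc N {} z0 - U. eps < \<bar>dt_eval tr x - f x\<bar>}) \<le> e1 * real (card (Qc N {} z0))"
      by (rule main_rec[OF taupos eps less_imp_le[OF e1pos] HC]) (simp_all add: z0)
    obtain tr W where tr: "dt_depth tr \<le> n" "W \<subseteq> cube N"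
      "tau\<^sup>2 * real n * real (card W) \<le> Pot N f {} z0"
      "eps * real (card {x \<in> cube N - W. eps < \<bar>dt_eval tr x - f x\<bar>}) \<le> e1 * real (card (cube N))"
      using ex unfolding Qall by (elim exE conjE) (rule that)
    have pot: "Pot N f {} z0 \<le> 4 * real dn * 2 ^ N"
    proof -
      have "Pot N f {} z0 = (\<Sum>k<N. \<Sum>x\<in>cube N. (f x - f (flip k x))\<^sup>2)"
        unfolding Pot_def Qall by simp
      also have "\<dots> \<le> 4 * real dn * 2 ^ N"
        by (rule total_inf[OF fpoly]) (use fb in \<open>auto simp: abs_le_iff\<close>)
      finally show ?thesis .
    qed
    have cardW: "real (card W) \<le> del / 2 * 2 ^ N"
    proof -
      have n8: "8 * real dn / (tau\<^sup>2 * del) \<le> real n"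
        unfolding n_def dn_def by linarith
      have t2: "tau\<^sup>2 > 0" using taupos by simp
      have "8 * real dn / del \<le> tau\<^sup>2 * real n"
        using n8 t2 del by (simp add: field_simps)
      then have "(8 * real dn / del) * real (card W) \<le> tau\<^sup>2 * real n * real (card W)"
        by (intro mult_right_mono) auto
      also have "\<dots> \<le> 4 * real dn * 2 ^ N" using tr(3) pot by linarith
      finally have "(8 * real dn / del) * real (card W) \<le> 4 * real dn * 2 ^ N" .
      then show ?thesis using del dn1 by (simp add: field_simps)
    qed
    let ?E = "{x \<in> cube N - W. eps < \<bar>dt_eval tr x - f x\<bar>}"
    have cardE: "real (card ?E) \<le> del / 2 * 2 ^ N"
    proof -
      have "eps * real (card ?E) \<le> eps * (del / 2 * 2 ^ N)"
        using tr(4) unfolding e1_def card_cube by (simp add: algebra_simps)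
      then show ?thesis using eps by simp
    qed
    let ?G = "{x \<in> cube N. \<bar>dt_eval tr x - acc_prob N M Us Acc T x\<bar> \<le> eps}"
    have cov: "cube N \<subseteq> ?G \<union> W \<union> ?E" unfolding f_def by auto
    have fW: "finite W" using finite_subset[OF tr(2)] by simp
    have "card (cube N) \<le> card (?G \<union> W \<union> ?E)" by (rule card_mono[OF _ cov]) (simp add: fW)
    also have "\<dots> \<le> card (?G \<union> W) + card ?E" by (rule card_Un_le)
    also have "\<dots> \<le> card ?G + card W + card ?E" using card_Un_le[of ?G W] by linarith
    finally have "real (card (cube N)) \<le> real (card ?G) + real (card W) + real (card ?E)" by linarith
    then have G: "(1 - del) * 2 ^ N \<le> real (card ?G)"
      using cardW cardE unfolding card_cube by (simp add: algebra_simps)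
    have "real (dt_depth tr) \<le> real n" using tr(1) by simp
    also have "\<dots> \<le> (16 * 4 ^ m + 1) * (1 + real T + 1 / eps + 1 / del) ^ (3 * m + 2)"
      unfolding n_def tau_def m_def by (rule bound[OF c eps del])
    finally show "\<exists>tr. real (dt_depth tr) \<le> (16 * 4 ^ m + 1) * (1 + real T + 1 / eps + 1 / del) ^ (3 * m + 2) \<and>
                 real (card {x \<in> cube N. \<bar>dt_eval tr x - acc_prob N M Us Acc T x\<bar> \<le> eps}) \<ge> (1 - del) * 2 ^ N"
      using G by blast
  qed
qed


end
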